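(* Let $0<r_1<r_2<1$ be fixed and let $T:\mathrm{Hol}(\mathbb{D})\to\mathrm{Hol}(\mathbb{D})$ be a linear continuous operator such that for all $f\in\mathrm{Hol}(\mathbb{D})$ and $i\in\{1,2\}$, \[ \|Tf\|_{\infty,r_i}=\|f\|_{\infty,r_i},\qquad\text{where } \|f\|_{\infty,r}=\sup_{|z|\le r}|f(z)|. \] Then there exist $\alpha,\beta\in\mathbb{C}$ with $|\alpha|=|\beta|=1$ such that $(Tf)(z)=\alpha f(\beta z)$ for all $f\in\mathrm{Hol}(\mathbb{D})$ and $z\in\mathbb{D}$.
   Context: $\mathbb{D}$ is the open unit disc and $\mathrm{Hol}(\mathbb{D})$ the space of holomorphic functions on $\mathbb{D}$ with the topology of uniform convergence on compact subsets. *)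

theory Defs
  imports "HOL-Complex_Analysis.Complex_Analysis"
begin

text \<open>Elements of Hol(D) are represented by total functions complex => complex that are
holomorphic on the open unit disc ball 0 1; only their values on the disc matter.\<close>

definition hol_disc :: "(complex \<Rightarrow> complex) set" where
  "hol_disc = {f. f holomorphic_on ball 0 1}"

definition sup_norm_r :: "real \<Rightarrow> (complex \<Rightarrow> complex) \<Rightarrow> real" where
  "sup_norm_r r f = (SUP z\<in>cball 0 r. cmod (f z))"

definition hol_converges :: "(nat \<Rightarrow> complex \<Rightarrow> complex) \<Rightarrow> (complex \<Rightarrow> complex) \<Rightarrow> bool" where
  "hol_converges F f \<longleftrightarrow>
     (\<forall>K. compact K \<and> K \<subseteq> ball 0 1 \<longrightarrow> uniform_limit K F f sequentially)"

definition hol_linear :: "((complex \<Rightarrow> complex) \<Rightarrow> (complex \<Rightarrow> complex)) \<Rightarrow> bool" where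
  "hol_linear T \<longleftrightarrow>
     (\<forall>f\<in>hol_disc. T f \<in> hol_disc) \<and>
     (\<forall>f\<in>hol_disc. \<forall>g\<in>hol_disc. \<forall>a b. \<forall>z\<in>ball 0 1.
        T (\<lambda>w. a * f w + b * g w) z = a * T f z + b * T g z)"

text \<open>Continuity with respect to the (metrizable) topology of Hol(D), stated sequentially.\<close>
definition hol_continuous :: "((complex \<Rightarrow> complex) \<Rightarrow> (complex \<Rightarrow> complex)) \<Rightarrow> bool" where
  "hol_continuous T \<longleftrightarrow>
     (\<forall>F f. (\<forall>n. F n \<in> hol_disc) \<and> f \<in> hol_disc \<and> hol_converges F f
        \<longrightarrow> hol_converges (\<lambda>n. T (F n)) (T f))"

end

theory Submission
  imports Defs
begin

lemma sn_bdd: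
  fixes f :: "complex \<Rightarrow> complex"
  assumes "continuous_on (cball 0 r) f"
  shows "bdd_above ((\<lambda>z. cmod (f z)) ` cball 0 r)"
proof -
  have "compact ((\<lambda>z. cmod (f z)) ` cball 0 r)"
  proof (rule compact_continuous_image)
    show "continuous_on (cball 0 r) (\<lambda>z. cmod (f z))" by (intro continuous_intros assms)
  qed simp
  then show ?thesis by (simp add: bounded_imp_bdd_above compact_imp_bounded)
qed

lemma sn_upper:
  fixes f :: "complex \<Rightarrow> complex"
  assumes "continuous_on (cball 0 r) f" "z \<in> cball 0 r"
  shows "cmod (f z) \<le> sup_norm_r r f"
  unfolding sup_norm_r_def by (rule cSUP_upper[OF assms(2) sn_bdd[OF assms(1)]])

lemma sn_least:
  fixes f :: "complex \<Rightarrow> complex"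
  assumes "0 \<le> r" "\<And>z. z \<in> cball 0 r \<Longrightarrow> cmod (f z) \<le> B"
  shows "sup_norm_r r f \<le> B"
  unfolding sup_norm_r_def using assms by (intro cSUP_least) auto

lemma sn_attained:
  fixes f :: "complex \<Rightarrow> complex"
  assumes "0 \<le> r" "continuous_on (cball 0 r) f"
  obtains z where "z \<in> cball 0 r" "cmod (f z) = sup_norm_r r f"
proof -
  have "continuous_on (cball 0 r) (\<lambda>z. cmod (f z))"
    by (intro continuous_intros assms)
  then obtain x where x: "x \<in> cball 0 r" "\<And>y. y \<in> cball 0 r \<Longrightarrow> cmod (f y) \<le> cmod (f x)"
    using continuous_attains_sup[of "cball 0 r" "\<lambda>z. cmod (f z)"] assms by auto
  have "sup_norm_r r f = cmod (f x)"
  proof (rule antisym)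
    show "sup_norm_r r f \<le> cmod (f x)" by (rule sn_least[OF assms(1)]) (rule x(2))
    show "cmod (f x) \<le> sup_norm_r r f" by (rule sn_upper[OF assms(2) x(1)])
  qed
  then show ?thesis using that x by auto
qed

lemma sn_cong:
  fixes f g :: "complex \<Rightarrow> complex"
  assumes "\<And>z. z \<in> cball 0 r \<Longrightarrow> cmod (f z) = cmod (g z)"
  shows "sup_norm_r r f = sup_norm_r r g"
  unfolding sup_norm_r_def using assms by (intro SUP_cong) auto

lemma hol_cont:
  fixes f :: "complex \<Rightarrow> complex"
  assumes "f holomorphic_on ball 0 1" "r < 1"
  shows "continuous_on (cball 0 r) f"
  by (rule holomorphic_on_imp_continuous_on, rule holomorphic_on_subset[OF assms(1)]) (use assms in auto)

lemma cmod_add_sq: "cmod (a + b) ^ 2 = cmod a ^ 2 + 2 * Re (cnj a * b) + cmod b ^ 2"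
  unfolding cmod_power2 by (simp add: algebra_simps power2_eq_square)

lemma one_plus_eq:
  fixes u :: complex
  assumes "cmod u \<le> r" "1 + r \<le> cmod (1 + u)"
  shows "u = of_real r"
proof -
  have t: "cmod (1 + u) \<le> 1 + cmod u" by (metis norm_one norm_triangle_ineq)
  have ur: "cmod u = r" using assms t by linarith
  have e: "cmod (1 + u) = 1 + cmod u" using assms t ur by linarith
  have "cmod (1 + u) ^ 2 = 1 + 2 * Re u + cmod u ^ 2"
    using cmod_add_sq[of 1 u] by simp
  moreover have "cmod (1 + u) ^ 2 = 1 + 2 * cmod u + cmod u ^ 2" using e by (simp add: power2_eq_square algebra_simps)
  ultimately have "Re u = cmod u" by simp
  then have "Im u = 0" by (metis abs_Re_le_cmod complex_Re_le_cmod cmod_eq_Re less_eq_real_def not_less abs_of_nonneg norm_ge_zero cmod_power2 power2_eq_square add_cancel_left_right mult_eq_0_iff)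
  then show ?thesis using ur \<open>Re u = cmod u\<close> by (simp add: complex_eq_iff)
qed

lemma pw:
  fixes p e z y c0 :: complex
  assumes r: "r > 0" and p: "cmod p = r" and e: "cmod e = 1" and M: "M \<ge> 0"
    and z: "cmod z \<le> r" and y: "cmod y \<le> B" and L: "L \<ge> 0"
    and lip: "cmod (y - c0) \<le> L * cmod (z - p)"
  shows "cmod (y + M * e * ((1 + cnj p * z / r\<^sup>2) / 2)) ^ 2
     \<le> (M + Re (cnj e * c0))\<^sup>2 + B\<^sup>2 + (cmod c0 / r + 2 * L)\<^sup>2 * r\<^sup>2"
proof -
  define w where "w = cnj p * z / r\<^sup>2"
  define k where "k = (1 + w) / 2"
  define \<delta> where "\<delta> = cmod (z - p)"
  define G where "G = cnj e * y"
  define c where "c = cnj e * c0"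
  have pp: "cnj p * p = of_real (r\<^sup>2)"
    using p by (metis complex_norm_square mult.commute)
  have w1: "cmod w \<le> 1"
    using r p z by (simp add: w_def norm_mult norm_divide norm_power power2_eq_square divide_le_eq_1 mult_mono)
  have "1 - w = cnj p * (p - z) / r\<^sup>2"
    using r pp by (simp add: w_def field_simps)
  then have w2: "cmod (1 - w) = \<delta> / r"
    using r p by (simp add: \<delta>_def norm_mult norm_divide norm_power power2_eq_square norm_minus_commute)
  have par: "cmod (1 + w) ^ 2 + cmod (1 - w) ^ 2 = 2 + 2 * cmod w ^ 2"
    unfolding cmod_power2 by (simp add: algebra_simps power2_eq_square)
  have wsq: "cmod w ^ 2 \<le> 1" using w1 by (simp add: power_le_one)
  have k2: "cmod k ^ 2 \<le> 1 - (\<delta> / r)\<^sup>2 / 4"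
  proof -
    have "cmod k ^ 2 = cmod (1 + w) ^ 2 / 4" by (simp add: k_def norm_divide power_divide)
    then show ?thesis using par wsq w2 by simp
  qed
  have k1: "cmod k \<le> 1"
  proof -
    have "cmod k ^ 2 \<le> 1" using k2 zero_le_power2[of "\<delta> / r"] by linarith
    then show ?thesis by (simp add: power_le_one_iff abs_le_square_iff)
  qed
  have km1: "cmod (k - 1) = \<delta> / (2 * r)"
  proof -
    have "k - 1 = (w - 1) / 2" by (simp add: k_def field_simps)
    then have "cmod (k - 1) = cmod ((w - 1) / 2)" by (simp only:)
    also have "\<dots> = cmod (1 - w) / 2" by (simp add: norm_divide norm_minus_commute)
    finally have "cmod (k - 1) = cmod (1 - w) / 2" .
    then show ?thesis using w2 by simp
  qed
  have eq1: "cmod (y + M * e * k) = cmod (G + M * k)"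
  proof -
    have ee: "cnj e * e = 1"
      using e complex_norm_square[of e] by (simp add: mult.commute)
    have "cnj e * (y + M * e * k) = cnj e * y + M * (cnj e * e) * k" by (simp add: algebra_simps)
    then have "G + M * k = cnj e * (y + M * e * k)"
      using ee by (simp add: G_def)
    then show ?thesis using e by (simp add: norm_mult)
  qed
  have Gb: "cmod G \<le> B" using e y by (simp add: G_def norm_mult)
  have Gc: "cmod (G - c) \<le> L * \<delta>"
  proof -
    have "G - c = cnj e * (y - c0)" by (simp add: G_def c_def algebra_simps)
    then show ?thesis using e lip by (simp add: norm_mult \<delta>_def)
  qed
  have cc: "cmod c = cmod c0" using e by (simp add: c_def norm_mult)
  have split: "cnj G * k = cnj c + cnj c * (k - 1) + cnj (G - c) * k"
    by (simp add: algebra_simps)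
  have re1: "Re (cnj c * (k - 1)) \<le> cmod c * (\<delta> / (2 * r))"
  proof -
    have "Re (cnj c * (k - 1)) \<le> cmod (cnj c * (k - 1))"
      by (rule complex_Re_le_cmod)
    also have "\<dots> = cmod c * cmod (k - 1)" by (simp only: norm_mult complex_mod_cnj)
    finally show ?thesis using km1 by simp
  qed
  have re2: "Re (cnj (G - c) * k) \<le> L * \<delta>"
  proof -
    have "Re (cnj (G - c) * k) \<le> cmod (cnj (G - c) * k)"
      by (rule complex_Re_le_cmod)
    also have "\<dots> = cmod (G - c) * cmod k" by (simp only: norm_mult complex_mod_cnj)
    also have "\<dots> \<le> L * \<delta> * 1"
      using Gc k1 L by (intro mult_mono) (auto simp: \<delta>_def)
    finally show ?thesis by simp
  qed
  have reG: "Re (cnj G * k) \<le> Re c + cmod c0 * (\<delta> / (2 * r)) + L * \<delta>"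
    using split re1 re2 cc by simp
  have sq: "cmod (G + M * k) ^ 2 = cmod G ^ 2 + 2 * M * Re (cnj G * k) + M\<^sup>2 * cmod k ^ 2"
    using cmod_add_sq[of G "of_real M * k"] M
    by (simp add: norm_mult power_mult_distrib algebra_simps)
  have "cmod (G + M * k) ^ 2 \<le> B\<^sup>2 + 2 * M * (Re c + cmod c0 * (\<delta> / (2 * r)) + L * \<delta>) + M\<^sup>2 * (1 - (\<delta> / r)\<^sup>2 / 4)"
  proof -
    have "cmod G ^ 2 \<le> B\<^sup>2" using Gb by (simp add: power_mono)
    moreover have "2 * M * Re (cnj G * k) \<le> 2 * M * (Re c + cmod c0 * (\<delta> / (2 * r)) + L * \<delta>)"
      using reG M by (simp add: mult_left_mono)
    moreover have "M\<^sup>2 * cmod k ^ 2 \<le> M\<^sup>2 * (1 - (\<delta> / r)\<^sup>2 / 4)"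
      using k2 by (simp add: mult_left_mono)
    ultimately show ?thesis using sq by linarith
  qed
  also have "\<dots> \<le> (M + Re c)\<^sup>2 + B\<^sup>2 + (cmod c0 / r + 2 * L)\<^sup>2 * r\<^sup>2"
  proof -
    define a where "a = cmod c0 / r + 2 * L"
    have "2 * M * (cmod c0 * (\<delta> / (2 * r)) + L * \<delta>) = M * \<delta> * a"
      using r by (simp add: a_def field_simps)
    moreover have "M * \<delta> * a - M\<^sup>2 * ((\<delta> / r)\<^sup>2 / 4) \<le> a\<^sup>2 * r\<^sup>2"
    proof -
      have "0 \<le> (M * \<delta> / (2 * r) - a * r)\<^sup>2" by simp
      then show ?thesis using r by (simp add: power2_eq_square field_simps)
    qed
    ultimately show ?thesis unfolding a_def[symmetric]
      by (simp add: power2_eq_square algebra_simps) (rule add_increasing[OF zero_le_square], assumption)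
  qed
  finally show ?thesis using eq1 by (simp add: k_def w_def c_def)
qed

lemma ub:
  fixes f :: "complex \<Rightarrow> complex" and p :: complex
  assumes hol: "f holomorphic_on ball 0 1" and r: "0 < r" "r < 1" and p: "cmod p = r"
  shows "\<exists>C. \<forall>M e. M \<ge> 0 \<longrightarrow> cmod e = 1 \<longrightarrow>
     sup_norm_r r (\<lambda>w. f w + M * e * ((1 + cnj p * w / (complex_of_real r)\<^sup>2) / 2)) \<le> sqrt ((M + Re (cnj e * f p))\<^sup>2 + C)"
proof -
  define B where "B = sup_norm_r r f"
  define L where "L = sup_norm_r r (deriv f)"
  have cf: "continuous_on (cball 0 r) f" using hol_cont[OF hol r(2)] .
  have hd: "deriv f holomorphic_on ball 0 1" by (rule holomorphic_deriv[OF hol]) simp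
  have cd: "continuous_on (cball 0 r) (deriv f)" using hol_cont[OF hd r(2)] .
  have fB: "cmod (f z) \<le> B" if "z \<in> cball 0 r" for z
    unfolding B_def by (rule sn_upper[OF cf that])
  have dL: "cmod (deriv f z) \<le> L" if "z \<in> cball 0 r" for z
    unfolding L_def by (rule sn_upper[OF cd that])
  have L0: "L \<ge> 0" using dL[of 0] r by (smt (verit) norm_ge_zero centre_in_cball)
  have pin: "p \<in> cball 0 r" using p by simp
  have lip: "cmod (f z - f p) \<le> L * cmod (z - p)" if "z \<in> cball 0 r" for z
  proof (rule field_differentiable_bound[OF convex_cball _ dL that pin])
    fix x :: complex assume x: "x \<in> cball 0 r"
    then have "x \<in> ball 0 1" using r by auto
    then have "(f has_field_derivative deriv f x) (at x)"
      using hol by (intro holomorphic_derivI[of f "ball 0 1"]) auto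
    then show "(f has_field_derivative deriv f x) (at x within cball 0 r)"
      by (rule has_field_derivative_at_within)
  qed
  define C where "C = B\<^sup>2 + (cmod (f p) / r + 2 * L)\<^sup>2 * r\<^sup>2"
  show ?thesis
  proof (intro exI allI impI)
    fix M :: real and e :: complex assume M: "M \<ge> 0" and e: "cmod e = 1"
    show "sup_norm_r r (\<lambda>w. f w + M * e * ((1 + cnj p * w / (complex_of_real r)\<^sup>2) / 2)) \<le> sqrt ((M + Re (cnj e * f p))\<^sup>2 + C)"
    proof (rule sn_least)
      show "0 \<le> r" using r by simp
      fix z :: complex assume z: "z \<in> cball 0 r"
      have "cmod (f z + M * e * ((1 + cnj p * z / (complex_of_real r)\<^sup>2) / 2)) ^ 2 \<le> (M + Re (cnj e * f p))\<^sup>2 + C"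
        using pw[OF r(1) p e M _ fB[OF z] L0 lip[OF z]] z unfolding C_def by (simp only: add.assoc mem_cball_0)
      then show "cmod (f z + M * e * ((1 + cnj p * z / (complex_of_real r)\<^sup>2) / 2)) \<le> sqrt ((M + Re (cnj e * f p))\<^sup>2 + C)"
        by (simp add: real_le_rsqrt)
    qed
  qed
qed

lemma sphere_limpt:
  assumes "0 < r"
  shows "(complex_of_real r) islimpt sphere 0 r"
proof (rule connected_imp_perfect)
  show "connected (sphere (0::complex) r)" by (rule connected_sphere) simp
  show "complex_of_real r \<in> sphere 0 r" using assms by simp
  fix x :: complex
  show "sphere 0 r \<noteq> {x}"
  proof
    assume "sphere 0 r = {x}"
    moreover have "complex_of_real r \<in> sphere 0 r" "- complex_of_real r \<in> sphere 0 r" using assms by auto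
    ultimately have "complex_of_real r = - complex_of_real r" by auto
    then show False using assms by (simp add: complex_eq_iff)
  qed
qed

lemma scale_hol:
  fixes h :: "complex \<Rightarrow> complex"
  assumes "h holomorphic_on ball 0 1" "cmod c \<le> 1"
  shows "(\<lambda>u. h (c * u)) holomorphic_on ball 0 1"
proof -
  have "(h \<circ> (\<lambda>u. c * u)) holomorphic_on ball 0 1"
  proof (rule holomorphic_on_compose_gen[OF _ assms(1)])
    show "(*) c holomorphic_on ball 0 1" by (intro holomorphic_intros)
    show "(*) c ` ball 0 1 \<subseteq> ball 0 1"
    proof
      fix y assume "y \<in> (*) c ` ball 0 1"
      then obtain u where u: "cmod u < 1" "y = c * u" by auto
      have "cmod (c * u) \<le> 1 * cmod u" unfolding norm_mult by (rule mult_right_mono) (use assms in auto)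
      then show "y \<in> ball 0 1" using u by simp
    qed
  qed
  then show ?thesis by (simp add: o_def)
qed

theorem theorem2p1:
  fixes r1 r2 :: real
    and T :: "(complex \<Rightarrow> complex) \<Rightarrow> (complex \<Rightarrow> complex)"
  assumes "0 < r1" and "r1 < r2" and "r2 < 1"
    and "hol_linear T" and "hol_continuous T"
    and "\<And>f. f \<in> hol_disc \<Longrightarrow> sup_norm_r r1 (T f) = sup_norm_r r1 f"
    and "\<And>f. f \<in> hol_disc \<Longrightarrow> sup_norm_r r2 (T f) = sup_norm_r r2 f"
  shows "\<exists>\<alpha> \<beta> :: complex. cmod \<alpha> = 1 \<and> cmod \<beta> = 1 \<and>
           (\<forall>f\<in>hol_disc. \<forall>z\<in>ball 0 1. T f z = \<alpha> * f (\<beta> * z))"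
proof -
  have r1: "0 < r1" and r12: "r1 < r2" and r2: "r2 < 1" using assms(1-3) by auto
  have Thd: "T f \<in> hol_disc" if "f \<in> hol_disc" for f
    using assms(4) that unfolding hol_linear_def by blast
  have Thol: "T f holomorphic_on ball 0 1" if "f \<in> hol_disc" for f
    using Thd[OF that] by (simp add: hol_disc_def)
  have Tlin: "T (\<lambda>w. a * f w + b * g w) z = a * T f z + b * T g z"
    if "f \<in> hol_disc" "g \<in> hol_disc" "z \<in> ball 0 1" for f g a b z
    using assms(4) that unfolding hol_linear_def by blast
  have iso: "sup_norm_r r (T f) = sup_norm_r r f" if "r = r1 \<or> r = r2" "f \<in> hol_disc" for r f
    using that assms(6,7) by blast
  have one_hd: "(\<lambda>_. 1) \<in> hol_disc" by (simp add: hol_disc_def)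
  have id_hd: "(\<lambda>w. w) \<in> hol_disc" by (simp add: hol_disc_def)
  have contT: "continuous_on (cball 0 r) (T f)" if "f \<in> hol_disc" "r < 1" for f r
    by (rule hol_cont[OF Thol[OF that(1)] that(2)])
  define g where "g = T (\<lambda>_. 1)"
  have ghol: "g holomorphic_on ball 0 1" unfolding g_def by (rule Thol[OF one_hd])
  have sn1: "sup_norm_r r (\<lambda>_::complex. 1::complex) = 1" if "0 \<le> r" for r
    unfolding sup_norm_r_def using that by simp
  have g1: "sup_norm_r r g = 1" if "r = r1 \<or> r = r2" for r
    unfolding g_def using iso[OF that one_hd] sn1 that r1 r12 by auto
  obtain w0 where w0: "w0 \<in> cball 0 r1" "cmod (g w0) = 1"
    using sn_attained[of r1 g] hol_cont[OF ghol, of r1] r1 r12 r2 g1[of r1] by auto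
  have "g constant_on ball 0 1"
  proof (rule maximum_modulus_principle[OF ghol, of "ball 0 r2" w0])
    show "w0 \<in> ball 0 r2" using w0 r12 by auto
    show "ball 0 r2 \<subseteq> ball 0 1" using r2 by auto
    fix z :: complex assume "z \<in> ball 0 r2"
    then have "cmod (g z) \<le> sup_norm_r r2 g"
      by (intro sn_upper hol_cont[OF ghol r2]) auto
    then show "cmod (g z) \<le> cmod (g w0)" using g1[of r2] w0 by simp
  qed (auto intro: convex_connected)
  then obtain \<alpha> where g\<alpha>: "\<And>z. z \<in> ball 0 1 \<Longrightarrow> g z = \<alpha>"
    unfolding constant_on_def by blast
  have \<alpha>1: "cmod \<alpha> = 1" using w0 g\<alpha>[of w0] r12 r2 by auto
  have \<alpha>\<alpha>: "cnj \<alpha> * \<alpha> = 1" using \<alpha>1 complex_norm_square[of \<alpha>] by (simp add: mult.commute)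
  define h where "h = (\<lambda>z. cnj \<alpha> * T (\<lambda>w. w) z)"
  have Tid: "T (\<lambda>w. w) z = \<alpha> * h z" for z
    unfolding h_def using \<alpha>\<alpha> by (simp add: mult.assoc[symmetric] mult.commute[of \<alpha>])
  have hhol: "h holomorphic_on ball 0 1" unfolding h_def by (intro holomorphic_intros Thol[OF id_hd])
  have hcont: "continuous_on (cball 0 r) h" if "r < 1" for r by (rule hol_cont[OF hhol that])
  have Tcomb: "T (\<lambda>w. 1 + c * w) z = \<alpha> * (1 + c * h z)" if "z \<in> ball 0 1" for c z
  proof -
    have "T (\<lambda>w. 1 * 1 + c * w) z = 1 * T (\<lambda>_. 1) z + c * T (\<lambda>w. w) z"
      by (rule Tlin[OF one_hd id_hd that])
    then show ?thesis using g\<alpha>[OF that] Tid[of z] by (simp add: g_def algebra_simps)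
  qed
  have hle: "cmod (h z) \<le> r" if "r = r1 \<or> r = r2" "z \<in> cball 0 r" for r z
  proof -
    have rr: "0 \<le> r" "r < 1" using that r1 r12 r2 by auto
    have "cmod (h z) = cmod (T (\<lambda>w. w) z)" using Tid[of z] \<alpha>1 by (simp add: norm_mult)
    also have "\<dots> \<le> sup_norm_r r (T (\<lambda>w. w))" by (rule sn_upper[OF contT[OF id_hd rr(2)] that(2)])
    also have "\<dots> = sup_norm_r r (\<lambda>w. w)" by (rule iso[OF that(1) id_hd])
    also have "\<dots> \<le> r" by (rule sn_least[OF rr(1)]) simp
    finally show ?thesis .
  qed
  have hdir: "\<exists>w\<in>cball 0 r1. h w = of_real r1 * e" if e: "cmod e = 1" for e :: complex
  proof -
    have ee: "cnj e * e = 1" using e complex_norm_square[of e] by (simp add: mult.commute)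
    define F where "F = (\<lambda>w::complex. 1 + cnj e * w)"
    have Fhd: "F \<in> hol_disc" unfolding F_def hol_disc_def mem_Collect_eq by (intro holomorphic_intros)
    have "cmod (F (r1 * e)) \<le> sup_norm_r r1 F"
      by (rule sn_upper) (use r1 e in \<open>auto simp: F_def norm_mult intro!: continuous_intros\<close>)
    moreover have "F (r1 * e) = 1 + r1" unfolding F_def using ee
      by (simp add: algebra_simps mult.assoc[symmetric])
    moreover have "cmod (1 + complex_of_real r1) = 1 + r1"
    proof -
      have "1 + complex_of_real r1 = of_real (1 + r1)" by simp
      then show ?thesis using r1 by (simp only: norm_of_real)
    qed
    ultimately have "1 + r1 \<le> sup_norm_r r1 (T F)" using iso[of r1 F] Fhd r1 by simp
    moreover obtain w where w: "w \<in> cball 0 r1" "cmod (T F w) = sup_norm_r r1 (T F)"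
      using sn_attained[OF _ contT[OF Fhd], of r1] r1 r12 r2 by auto
    moreover have "T F w = \<alpha> * (1 + cnj e * h w)"
      unfolding F_def by (rule Tcomb) (use w r12 r2 in auto)
    ultimately have "1 + r1 \<le> cmod (1 + cnj e * h w)" using \<alpha>1 by (simp add: norm_mult)
    moreover have "cmod (cnj e * h w) \<le> r1" using hle[of r1 w] w e by (simp add: norm_mult)
    ultimately have "cnj e * h w = of_real r1" using one_plus_eq by blast
    then have "e * (cnj e * h w) = of_real r1 * e" by simp
    then have "h w = of_real r1 * e" using ee by (simp add: mult.assoc[symmetric] mult.commute[of e])
    then show ?thesis using w by blast
  qed
  have hlt: "cmod (h z) < r2" if z: "z \<in> ball 0 r2" for z
  proof (rule ccontr)
    assume "\<not> cmod (h z) < r2"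
    then have hz: "cmod (h z) = r2" using hle[of r2 z] z by auto
    have "h constant_on ball 0 r2"
    proof (rule maximum_modulus_principle[of h "ball 0 r2" "ball 0 r2" z])
      show "h holomorphic_on ball 0 r2" by (rule holomorphic_on_subset[OF hhol]) (use r2 in auto)
      fix y :: complex assume "y \<in> ball 0 r2"
      then show "cmod (h y) \<le> cmod (h z)" using hle[of r2 y] hz by auto
    qed (use z in \<open>auto intro: convex_connected\<close>)
    then obtain c where c: "\<And>y. y \<in> ball 0 r2 \<Longrightarrow> h y = c" unfolding constant_on_def by blast
    obtain w1 where w1: "w1 \<in> cball 0 r1" "h w1 = r1 * 1" using hdir[of 1] by auto
    obtain w2 where w2: "w2 \<in> cball 0 r1" "h w2 = r1 * (-1)" using hdir[of "-1"] by auto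
    have "h w1 = h w2" using c[of w1] c[of w2] w1 w2 r12 by auto
    then show False using w1 w2 r1 by (simp add: complex_eq_iff)
  qed
  define \<phi> where "\<phi> = (\<lambda>u. h (complex_of_real r2 * u) / complex_of_real r2)"
  have \<phi>hol: "\<phi> holomorphic_on ball 0 1"
    unfolding \<phi>_def using r1 r12 r2 by (intro holomorphic_intros scale_hol[OF hhol]) auto
  have \<phi>lt: "cmod (\<phi> u) < 1" if "cmod u < 1" for u
  proof -
    have "complex_of_real r2 * u \<in> ball 0 r2"
      using that r1 r12 by (simp add: norm_mult)
    then have "cmod (h (complex_of_real r2 * u)) < r2" by (rule hlt)
    then show ?thesis using r1 r12 unfolding \<phi>_def by (simp add: norm_divide)
  qed
  have \<phi>w: "\<phi> (w / complex_of_real r2) = h w / complex_of_real r2" for w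
    unfolding \<phi>_def using r1 r12 by simp
  have wu: "cmod (w / complex_of_real r2) \<le> r1 / r2" "cmod (w / complex_of_real r2) < 1"
    if "w \<in> cball 0 r1" for w
  proof -
    show "cmod (w / complex_of_real r2) \<le> r1 / r2"
      using that r1 r12 by (simp add: norm_divide divide_right_mono)
    also have "r1 / r2 < 1" using r1 r12 by simp
    finally show "cmod (w / complex_of_real r2) < 1" .
  qed
  have h0: "h 0 = 0"
  proof (rule ccontr)
    assume h0: "h 0 \<noteq> 0"
    define a where "a = \<phi> 0"
    have a0: "a \<noteq> 0" using h0 r1 r12 by (simp add: a_def \<phi>_def)
    have a1: "cmod a < 1" unfolding a_def by (rule \<phi>lt) simp
    define s where "s = a / cmod a"
    have s1: "cmod s = 1" using a0 by (simp add: s_def norm_divide)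
    have ss: "cnj s * s = 1" using s1 complex_norm_square[of s] by (simp add: mult.commute)
    have as: "a = of_real (cmod a) * s" using a0 by (simp add: s_def)
    obtain w where w: "w \<in> cball 0 r1" "h w = of_real r1 * (- s)" using hdir[of "- s"] s1 by auto
    define \<rho> where "\<rho> = r1 / r2"
    have \<rho>: "0 < \<rho>" "\<rho> < 1" using r1 r12 by (auto simp: \<rho>_def)
    define u where "u = w / complex_of_real r2"
    have \<phi>u: "\<phi> u = - of_real \<rho> * s" using w r1 r12 unfolding u_def \<phi>w \<rho>_def by simp
    define \<psi> where "\<psi> = Moebius_function 0 a \<circ> \<phi>"
    have \<psi>hol: "\<psi> holomorphic_on ball 0 1"
      unfolding \<psi>_def
      by (rule holomorphic_on_compose_gen[OF \<phi>hol Moebius_function_holomorphic[OF a1]]) (auto intro: \<phi>lt)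
    have \<psi>0: "\<psi> 0 = 0" by (simp add: \<psi>_def a_def Moebius_function_eq_zero)
    have \<psi>lt: "cmod (\<psi> z) < 1" if "cmod z < 1" for z
      unfolding \<psi>_def o_def by (rule Moebius_function_norm_lt_1[OF a1 \<phi>lt[OF that]])
    have u1: "cmod u < 1" unfolding u_def by (rule wu(2)[OF w(1)])
    have "cmod (\<psi> u) \<le> cmod u"
      using Schwarz_Lemma(1)[of \<psi> u] \<psi>hol \<psi>0 \<psi>lt u1 by blast
    also have "cmod u \<le> \<rho>" using wu[OF w(1)] by (simp add: u_def \<rho>_def)
    finally have le: "cmod (\<psi> u) \<le> \<rho>" .
    have num: "\<phi> u - a = - of_real (\<rho> + cmod a) * s" using \<phi>u as by (simp add: algebra_simps)
    have den: "1 - cnj a * \<phi> u = of_real (1 + \<rho> * cmod a)"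
    proof -
      have cas: "cnj a = of_real (cmod a) * cnj s"
        using arg_cong[OF as, of cnj] by simp
      have "cnj a * \<phi> u = - of_real (\<rho> * cmod a) * (cnj s * s)"
        unfolding cas \<phi>u by (simp add: algebra_simps)
      then show ?thesis using ss by simp
    qed
    have "\<psi> u = (\<phi> u - a) / (1 - cnj a * \<phi> u)"
      by (simp add: \<psi>_def Moebius_function_simple)
    then have "\<psi> u = - of_real (\<rho> + cmod a) * s / of_real (1 + \<rho> * cmod a)"
      by (simp only: num den)
    then have "cmod (\<psi> u) = cmod (of_real (\<rho> + cmod a) :: complex) * cmod s / cmod (of_real (1 + \<rho> * cmod a) :: complex)"
      by (simp only: norm_divide norm_mult norm_minus_cancel)
    then have "cmod (\<psi> u) = (\<rho> + cmod a) / (1 + \<rho> * cmod a)"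
      using s1 \<rho> by (simp only: norm_of_real) simp
    with le have "(\<rho> + cmod a) / (1 + \<rho> * cmod a) \<le> \<rho>" by simp
    then have "\<rho> + cmod a \<le> \<rho> * (1 + \<rho> * cmod a)"
      using \<rho> by (simp add: divide_le_eq add_pos_nonneg)
    then have "cmod a * (1 - \<rho> * \<rho>) \<le> 0" by (simp add: algebra_simps)
    moreover have "0 < cmod a * (1 - \<rho> * \<rho>)"
    proof (intro mult_pos_pos)
      show "0 < cmod a" using a0 by simp
      have "\<rho> * \<rho> < 1 * 1" using \<rho> by (intro mult_strict_mono) auto
      then show "0 < 1 - \<rho> * \<rho>" by simp
    qed
    ultimately show False by simp
  qed
  obtain \<beta> where \<beta>1: "cmod \<beta> = 1" and h\<beta>: "\<And>z. z \<in> ball 0 r2 \<Longrightarrow> h z = \<beta> * z"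
  proof -
    obtain w where w: "w \<in> cball 0 r1" "h w = of_real r1 * 1" using hdir[of 1] by auto
    have w0: "w \<noteq> 0" using w h0 r1 by auto
    define u where "u = w / complex_of_real r2"
    have u1: "cmod u < 1" using wu[OF w(1)] by (simp add: u_def)
    have u0: "u \<noteq> 0" using w0 r1 r12 by (simp add: u_def)
    have \<phi>0: "\<phi> 0 = 0" by (simp add: \<phi>_def h0)
    have "cmod (\<phi> u) = r1 / r2" using w r1 r12 unfolding u_def \<phi>w by (simp add: norm_divide)
    moreover have "cmod (\<phi> u) \<le> cmod u"
      by (rule Schwarz_Lemma(1)[OF \<phi>hol \<phi>0 \<phi>lt u1])
    moreover have "cmod u \<le> r1 / r2" using wu[OF w(1)] by (simp add: u_def)
    ultimately have "cmod (\<phi> u) = cmod u" by simp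
    then obtain b where b: "\<And>z. cmod z < 1 \<Longrightarrow> \<phi> z = b * z" "cmod b = 1"
      using Schwarz_Lemma(3)[OF \<phi>hol \<phi>0 \<phi>lt u1] u1 u0 by blast
    show ?thesis
    proof (rule that[OF b(2)])
      fix z :: complex assume z: "z \<in> ball 0 r2"
      have "cmod (z / complex_of_real r2) < 1" using z r1 r12 by (simp add: norm_divide)
      then have "\<phi> (z / complex_of_real r2) = b * (z / complex_of_real r2)" by (rule b(1))
      then show "h z = b * z" using r1 r12 unfolding \<phi>w by (simp add: field_simps)
    qed
  qed
  have \<beta>\<beta>: "\<beta> * cnj \<beta> = 1" using \<beta>1 complex_norm_square[of \<beta>] by simp
  have key: "T f (cnj \<beta> * p) = \<alpha> * f p" if fhd: "f \<in> hol_disc" and p: "cmod p = r1" for f p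
  proof (rule ccontr)
    assume ne: "T f (cnj \<beta> * p) \<noteq> \<alpha> * f p"
    define q where "q = cnj \<beta> * p"
    have q1: "cmod q = r1" using p \<beta>1 by (simp add: q_def norm_mult)
    have qb2: "q \<in> ball 0 r2" and qb: "q \<in> ball 0 1" using q1 r12 r2 by auto
    have \<beta>q: "\<beta> * q = p" unfolding q_def using \<beta>\<beta> by (simp add: mult.assoc[symmetric])
    have fhol: "f holomorphic_on ball 0 1" using fhd by (simp add: hol_disc_def)
    define d where "d = cnj \<alpha> * T f q - f p"
    have "\<alpha> * (f p + d) = (cnj \<alpha> * \<alpha>) * T f q" unfolding d_def by (simp add: algebra_simps)
    then have Tfq: "T f q = \<alpha> * (f p + d)" using \<alpha>\<alpha> by simp
    have d0: "d \<noteq> 0" using ne Tfq by (auto simp: q_def)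
    define e where "e = d / cmod d"
    have e1: "cmod e = 1" using d0 by (simp add: e_def norm_divide)
    have ee: "cnj e * e = 1" using e1 complex_norm_square[of e] by (simp add: mult.commute)
    have ed: "cnj e * d = of_real (cmod d)"
      using d0 complex_norm_square[of d] by (simp add: e_def power2_eq_square field_simps)
    define K where "K = (\<lambda>w. (1 + cnj p * w / (complex_of_real r1)\<^sup>2) / 2)"
    have Khd: "K \<in> hol_disc" unfolding K_def hol_disc_def mem_Collect_eq using r1 by (intro holomorphic_intros) auto
    have pp: "cnj p * p = (complex_of_real r1)\<^sup>2" using p complex_norm_square[of p] by (simp add: mult.commute)
    have TK: "T K q = \<alpha>"
    proof -
      have "(\<lambda>w. (1/2) * 1 + (cnj p / (2 * (complex_of_real r1)\<^sup>2)) * w) = K"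
        unfolding K_def by (rule ext) (simp add: field_simps)
      moreover have "T (\<lambda>w. (1/2) * 1 + (cnj p / (2 * (complex_of_real r1)\<^sup>2)) * w) q
          = (1/2) * T (\<lambda>_. 1) q + (cnj p / (2 * (complex_of_real r1)\<^sup>2)) * T (\<lambda>w. w) q"
        by (rule Tlin[OF one_hd id_hd qb])
      ultimately have "T K q = (1/2) * \<alpha> + (cnj p / (2 * (complex_of_real r1)\<^sup>2)) * (\<alpha> * p)"
        using g\<alpha>[OF qb] Tid[of q] h\<beta>[OF qb2] \<beta>q by (simp add: g_def)
      also have "\<dots> = (1/2) * \<alpha> + \<alpha> * (cnj p * p) / (2 * (complex_of_real r1)\<^sup>2)"
        by (simp add: field_simps)
      also have "\<dots> = \<alpha>" using r1 unfolding pp by (simp add: field_simps)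
      finally show ?thesis .
    qed
    obtain C where C: "\<And>M e. M \<ge> 0 \<Longrightarrow> cmod e = 1 \<Longrightarrow>
        sup_norm_r r1 (\<lambda>w. f w + M * e * ((1 + cnj p * w / (complex_of_real r1)\<^sup>2) / 2)) \<le> sqrt ((M + Re (cnj e * f p))\<^sup>2 + C)"
      using ub[OF fhol r1 _ p] r12 r2 by force
    define x where "x = Re (cnj e * f p)"
    define M where "M = \<bar>x\<bar> + \<bar>C\<bar> / (2 * cmod d) + 1"
    have dpos: "0 < cmod d" using d0 by simp
    have M0: "M \<ge> 0" unfolding M_def using dpos by (simp add: add_nonneg_nonneg)
    define F where "F = (\<lambda>w. f w + complex_of_real M * e * K w)"
    have F_eq: "F = (\<lambda>w. 1 * f w + (complex_of_real M * e) * K w)" unfolding F_def by simp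
    have Fhd: "F \<in> hol_disc" using fhol Khd unfolding F_def hol_disc_def mem_Collect_eq
      by (intro holomorphic_intros) auto
    have TFq: "T F q = \<alpha> * (f p + d + M * e)"
    proof -
      have "T F q = 1 * T f q + (complex_of_real M * e) * T K q"
        unfolding F_eq by (rule Tlin[OF fhd Khd qb])
      then show ?thesis using TK Tfq by (simp add: algebra_simps)
    qed
    have "cmod (T F q) \<le> sup_norm_r r1 (T F)"
      by (rule sn_upper[OF contT[OF Fhd]]) (use q1 r12 r2 in auto)
    also have "\<dots> = sup_norm_r r1 F" by (rule iso[OF _ Fhd]) simp
    also have "\<dots> \<le> sqrt ((M + x)\<^sup>2 + C)"
      unfolding F_def K_def x_def by (rule C[OF M0 e1])
    finally have up: "cmod (f p + d + M * e) \<le> sqrt ((M + x)\<^sup>2 + C)"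
      using TFq \<alpha>1 by (simp add: norm_mult)
    have "cnj e * (f p + d + M * e) = cnj e * f p + cnj e * d + of_real M * (cnj e * e)"
      by (simp add: algebra_simps)
    then have "cnj e * (f p + d + M * e) = cnj e * f p + of_real (cmod d) + of_real M"
      using ed ee by simp
    then have "Re (cnj e * (f p + d + M * e)) = x + cmod d + M"
      unfolding x_def by simp
    moreover have "Re (cnj e * (f p + d + M * e)) \<le> cmod (f p + d + M * e)"
      using complex_Re_le_cmod[of "cnj e * (f p + d + M * e)"] e1 by (simp add: norm_mult)
    ultimately have lo: "x + cmod d + M \<le> sqrt ((M + x)\<^sup>2 + C)" using up by linarith
    have Mx: "M + x \<ge> \<bar>C\<bar> / (2 * cmod d) + 1" unfolding M_def by linarith
    then have pos: "0 \<le> x + cmod d + M" using dpos by (smt (verit) divide_nonneg_pos abs_ge_zero)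
    have "(x + cmod d + M)\<^sup>2 \<le> (M + x)\<^sup>2 + C"
    proof -
      have Y0: "0 \<le> (M + x)\<^sup>2 + C"
      proof (rule ccontr)
        assume "\<not> 0 \<le> (M + x)\<^sup>2 + C"
        then have "sqrt ((M + x)\<^sup>2 + C) < 0" by simp
        then show False using lo pos by linarith
      qed
      have "(x + cmod d + M)\<^sup>2 \<le> (sqrt ((M + x)\<^sup>2 + C))\<^sup>2" by (rule power_mono[OF lo pos])
      then show ?thesis using Y0 by simp
    qed
    then have "2 * (M + x) * cmod d + (cmod d)\<^sup>2 \<le> C" by (simp add: power2_eq_square algebra_simps)
    moreover have "2 * (M + x) * cmod d \<ge> 2 * (\<bar>C\<bar> / (2 * cmod d) + 1) * cmod d"
      using Mx dpos by (intro mult_right_mono) auto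
    moreover have "2 * (\<bar>C\<bar> / (2 * cmod d) + 1) * cmod d = \<bar>C\<bar> + 2 * cmod d"
      using dpos by (simp add: field_simps)
    ultimately show False using dpos by (smt (verit) zero_le_power2 abs_ge_self)
  qed
  have onc: "T f z = \<alpha> * f (\<beta> * z)" if "f \<in> hol_disc" "cmod z = r1" for f z
  proof -
    have "cnj \<beta> * (\<beta> * z) = z" using \<beta>\<beta> by (simp add: mult.assoc[symmetric] mult.commute[of "cnj \<beta>"])
    moreover have "cmod (\<beta> * z) = r1" using that(2) \<beta>1 by (simp add: norm_mult)
    ultimately show ?thesis using key[OF that(1), of "\<beta> * z"] by (simp only:)
  qed
  show ?thesis
  proof (intro exI conjI ballI)
    show "cmod \<alpha> = 1" "cmod \<beta> = 1" by (fact \<alpha>1, fact \<beta>1)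
    fix f z assume f: "f \<in> hol_disc" and z: "z \<in> ball (0::complex) 1"
    have fhol: "f holomorphic_on ball 0 1" using f by (simp add: hol_disc_def)
    have H: "(\<lambda>z. T f z - \<alpha> * f (\<beta> * z)) holomorphic_on ball 0 1"
      using \<beta>1 by (intro holomorphic_intros Thol[OF f] scale_hol[OF fhol]) auto
    have S1: "sphere 0 r1 \<subseteq> ball (0::complex) 1" "complex_of_real r1 \<in> ball 0 1" using r1 r12 r2 by auto
    have Z: "\<And>w. w \<in> sphere 0 r1 \<Longrightarrow> T f w - \<alpha> * f (\<beta> * w) = 0" using onc[OF f] by simp
    have "T f z - \<alpha> * f (\<beta> * z) = 0"
      by (rule analytic_continuation[of "\<lambda>z. T f z - \<alpha> * f (\<beta> * z)", OF H open_ball connected_ball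
            S1(1) S1(2) sphere_limpt[OF r1] Z z])
    then show "T f z = \<alpha> * f (\<beta> * z)" by simp
  qed
qed

end
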